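(* Let $X$ be a metric space with an accumulation point, and let $\rho:\mathcal{F}\to[\Psi]^\omega$ be a partition regular function. Then: (i) $\rho$ is $P^+$ if and only if $\Lambda_x(\rho)=\Gamma_x(\rho)$ for every sequence $x\in X^\Psi$; (ii) $\rho$ is $P^{\,|}$ if and only if $\Lambda_x(\rho)$ is closed for every sequence $x\in X^\Psi$; (iii) if $X$ is moreover locally compact, then $\rho$ is $P^-$ if and only if, for every sequence $x\in X^\Psi$, each isolated point of $\Gamma_x(\rho)$ belongs to $\Lambda_x(\rho)$.
   Context: Let $\Omega,\Psi$ be countably infinite sets and $\mathcal{F}\subseteq[\Omega]^\omega$ a nonempty family of infinite subsets of $\Omega$ with $A\setminus K\in\mathcal{F}$ for all $A\in\mathcal{F}$ and finite $K\subseteq\Omega$. A function $\rho:\mathcal{F}\to[\Psi]^\omega$ is partition regular if: (M) $E\subseteq F$ in $\mathcal{F}$ implies $\rho(E)\subseteq\rho(F)$; (R) for every $F\in\mathcal{F}$ and $A,B\subseteq\Psi$ with $\rho(F)=A\cup B$ there is $E\in\mathcal{F}$ with $\rho(E)\subseteq A$ or $\rho(E)\subseteq B$; (S) for every $F\in\mathcal{F}$ there is $E\subseteq F$, $E\in\mathcal{F}$, such that for every $a\in\rho(E)$ there is a finite $K\subseteq\Omega$ with $a\notin\rho(E\setminus K)$. $\mathcal{I}_\rho=\{S\subseteq\Psi:\forall F\in\mathcal{F}\ \rho(F)\not\subseteq S\}$ and $\mathcal{I}_\rho^+=\mathcal{P}(\Psi)\setminus\mathcal{I}_\rho$. For $F\in\mathcal{F}$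 and $B\subseteq\Psi$ write $\rho(F)\subseteq^\rho B$ if there is a finite $K\subseteq\Omega$ with $\rho(F\setminus K)\subseteq B$. $\rho$ is $P^+$ if for every $\subseteq$-decreasing sequence $(A_n)_{n\in\omega}$ of sets in $\mathcal{I}_\rho^+$ there is $F\in\mathcal{F}$ with $\rho(F)\subseteq^\rho A_n$ for all $n$; $P^-$ if the same holds for every such sequence with additionally $A_n\setminus A_{n+1}\in\mathcal{I}_\rho$ for all $n$; $P^{\,|}$ if the same holds for every such sequence with additionally $A_n\setminus A_{n+1}\in\mathcal{I}_\rho^+$ for all $n$. For $x:\Psi\to X$: $\Gamma_x(\rho)$ is the set of $\eta\in X$ such that for every neighborhood $U$ of $\eta$ there is $F\in\mathcal{F}$ with $\rho(F)\subseteq\{s\in\Psi:x_s\in U\}$; $\Lambda_x(\rho)$ is the set of $\eta\in X$ for which there is $F\in\mathcal{F}$ such that for every neighborhood $U$ of $\eta$ there is a finite $K\subseteq\Omega$ with $x_s\in U$ for all $s\in\rho(F\setminus K)$. *)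

theory Defs
  imports "HOL-Analysis.Analysis"
begin

definition admissible_family :: "'o set set \<Rightarrow> bool" where
  "admissible_family FF \<longleftrightarrow> FF \<noteq> {} \<and> (\<forall>A\<in>FF. infinite A) \<and>
     (\<forall>A\<in>FF. \<forall>K. finite K \<longrightarrow> A - K \<in> FF)"

definition partition_regular :: "'o set set \<Rightarrow> ('o set \<Rightarrow> 'p set) \<Rightarrow> bool" where
  "partition_regular FF \<rho> \<longleftrightarrow>
     (\<forall>F\<in>FF. infinite (\<rho> F)) \<and>
     (\<forall>E\<in>FF. \<forall>F\<in>FF. E \<subseteq> F \<longrightarrow> \<rho> E \<subseteq> \<rho> F) \<and>
     (\<forall>F\<in>FF. \<forall>A B. \<rho> F = A \<union> B \<longrightarrow> (\<exists>E\<in>FF. \<rho> E \<subseteq> A \<or> \<rho> E \<subseteq> B)) \<and>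
     (\<forall>F\<in>FF. \<exists>E\<in>FF. E \<subseteq> F \<and>
        (\<forall>a\<in>\<rho> E. \<exists>K. finite K \<and> a \<notin> \<rho> (E - K)))"

definition I_rho :: "'o set set \<Rightarrow> ('o set \<Rightarrow> 'p set) \<Rightarrow> 'p set set" where
  "I_rho FF \<rho> = {S. \<forall>F\<in>FF. \<not> \<rho> F \<subseteq> S}"

definition I_rho_plus :: "'o set set \<Rightarrow> ('o set \<Rightarrow> 'p set) \<Rightarrow> 'p set set" where
  "I_rho_plus FF \<rho> = UNIV - I_rho FF \<rho>"

definition sub_rho :: "('o set \<Rightarrow> 'p set) \<Rightarrow> 'o set \<Rightarrow> 'p set \<Rightarrow> bool" where
  "sub_rho \<rho> F B \<longleftrightarrow> (\<exists>K. finite K \<and> \<rho> (F - K) \<subseteq> B)"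

definition P_plus :: "'o set set \<Rightarrow> ('o set \<Rightarrow> 'p set) \<Rightarrow> bool" where
  "P_plus FF \<rho> \<longleftrightarrow> (\<forall>A :: nat \<Rightarrow> 'p set.
     (\<forall>n. A (Suc n) \<subseteq> A n) \<and> (\<forall>n. A n \<in> I_rho_plus FF \<rho>) \<longrightarrow>
     (\<exists>F\<in>FF. \<forall>n. sub_rho \<rho> F (A n)))"

definition P_minus :: "'o set set \<Rightarrow> ('o set \<Rightarrow> 'p set) \<Rightarrow> bool" where
  "P_minus FF \<rho> \<longleftrightarrow> (\<forall>A :: nat \<Rightarrow> 'p set.
     (\<forall>n. A (Suc n) \<subseteq> A n) \<and> (\<forall>n. A n \<in> I_rho_plus FF \<rho>) \<and>
     (\<forall>n. A n - A (Suc n) \<in> I_rho FF \<rho>) \<longrightarrow>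
     (\<exists>F\<in>FF. \<forall>n. sub_rho \<rho> F (A n)))"

definition P_bar :: "'o set set \<Rightarrow> ('o set \<Rightarrow> 'p set) \<Rightarrow> bool" where
  "P_bar FF \<rho> \<longleftrightarrow> (\<forall>A :: nat \<Rightarrow> 'p set.
     (\<forall>n. A (Suc n) \<subseteq> A n) \<and> (\<forall>n. A n \<in> I_rho_plus FF \<rho>) \<and>
     (\<forall>n. A n - A (Suc n) \<in> I_rho_plus FF \<rho>) \<longrightarrow>
     (\<exists>F\<in>FF. \<forall>n. sub_rho \<rho> F (A n)))"

definition Gamma_rho :: "'o set set \<Rightarrow> ('o set \<Rightarrow> 'p set) \<Rightarrow> ('p \<Rightarrow> 'x::topological_space) \<Rightarrow> 'x set" where
  "Gamma_rho FF \<rho> x = {\<eta>. \<forall>U. open U \<and> \<eta> \<in> U \<longrightarrow>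
      (\<exists>F\<in>FF. \<rho> F \<subseteq> {s. x s \<in> U})}"

definition Lambda_rho :: "'o set set \<Rightarrow> ('o set \<Rightarrow> 'p set) \<Rightarrow> ('p \<Rightarrow> 'x::topological_space) \<Rightarrow> 'x set" where
  "Lambda_rho FF \<rho> x = {\<eta>. \<exists>F\<in>FF. \<forall>U. open U \<and> \<eta> \<in> U \<longrightarrow>
      (\<exists>K. finite K \<and> (\<forall>s\<in>\<rho> (F - K). x s \<in> U))}"

definition isolated_point_of :: "'x::topological_space \<Rightarrow> 'x set \<Rightarrow> bool" where
  "isolated_point_of \<eta> S \<longleftrightarrow> \<eta> \<in> S \<and> (\<exists>U. open U \<and> U \<inter> S = {\<eta>})"

end

theory Submission imports Defs begin

lemma Iplus_iff: "S \<in> I_rho_plus FF \<rho> \<longleftrightarrow> (\<exists>F\<in>FF. \<rho> F \<subseteq> S)"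
  by (auto simp: I_rho_plus_def I_rho_def)

lemma I_iff: "S \<in> I_rho FF \<rho> \<longleftrightarrow> (\<forall>F\<in>FF. \<not> \<rho> F \<subseteq> S)"
  by (auto simp: I_rho_def)

lemma Iplus_mono: "S \<in> I_rho_plus FF \<rho> \<Longrightarrow> S \<subseteq> T \<Longrightarrow> T \<in> I_rho_plus FF \<rho>"
  by (auto simp: Iplus_iff)

lemma I_Un:
  assumes pr: "partition_regular FF \<rho>" and "S \<in> I_rho FF \<rho>" "T \<in> I_rho FF \<rho>"
  shows "S \<union> T \<in> I_rho FF \<rho>"
proof (rule ccontr)
  assume "S \<union> T \<notin> I_rho FF \<rho>"
  then obtain F where F: "F \<in> FF" "\<rho> F \<subseteq> S \<union> T" by (auto simp: I_iff)
  have "\<rho> F = (\<rho> F \<inter> S) \<union> (\<rho> F \<inter> T)" using F by auto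
  then obtain E where "E \<in> FF" "\<rho> E \<subseteq> \<rho> F \<inter> S \<or> \<rho> E \<subseteq> \<rho> F \<inter> T"
    using pr F(1) unfolding partition_regular_def by metis
  then show False using assms(2,3) by (auto simp: I_iff)
qed

lemma I_empty:
  assumes pr: "partition_regular FF \<rho>"
  shows "{} \<in> I_rho FF \<rho>"
  using pr unfolding partition_regular_def I_iff by auto

lemma I_finite_Union:
  assumes pr: "partition_regular FF \<rho>" and "finite N" and "\<And>n. n \<in> N \<Longrightarrow> B n \<in> I_rho FF \<rho>"
  shows "(\<Union>n\<in>N. B n) \<in> I_rho FF \<rho>"
  using assms(2,3)
proof (induction N rule: finite_induct)
  case empty then show ?case using I_empty[OF pr] by simp
next
  case (insert a N) then show ?case using I_Un[OF pr] by simp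
qed

lemma I_subset: "T \<in> I_rho FF \<rho> \<Longrightarrow> S \<subseteq> T \<Longrightarrow> S \<in> I_rho FF \<rho>"
  by (auto simp: I_iff)

lemma Lambda_sub_Gamma:
  assumes adm: "admissible_family FF"
  shows "Lambda_rho FF \<rho> x \<subseteq> Gamma_rho FF \<rho> x"
proof
  fix \<eta> assume "\<eta> \<in> Lambda_rho FF \<rho> x"
  then obtain F where F: "F \<in> FF" and H: "\<And>U. open U \<Longrightarrow> \<eta> \<in> U \<Longrightarrow> \<exists>K. finite K \<and> (\<forall>s\<in>\<rho> (F - K). x s \<in> U)"
    by (auto simp: Lambda_rho_def)
  show "\<eta> \<in> Gamma_rho FF \<rho> x"
    unfolding Gamma_rho_def
  proof (safe)
    fix U assume "open U" "\<eta> \<in> U"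
    then obtain K where "finite K" "\<forall>s\<in>\<rho> (F - K). x s \<in> U" using H by blast
    moreover have "F - K \<in> FF" using adm F \<open>finite K\<close> by (auto simp: admissible_family_def)
    ultimately show "\<exists>F\<in>FF. \<rho> F \<subseteq> {s. x s \<in> U}" by blast
  qed
qed

lemma decr_le:
  assumes "\<forall>n. A (Suc n) \<subseteq> A n" "m \<le> n"
  shows "A n \<subseteq> A m"
  using assms(2)
proof (induction n)
  case 0 then show ?case by simp
next
  case (Suc n) then show ?case using assms(1) by (metis le_Suc_eq order_refl subset_trans)
qed

lemma Lambda_from_seq:
  fixes x :: "'p \<Rightarrow> 'x::metric_space"
  assumes F: "F \<in> FF" and sub: "\<forall>n. sub_rho \<rho> F (A n)"
    and sm: "\<And>e. e > 0 \<Longrightarrow> \<exists>n. A n \<subseteq> {s. dist (x s) \<eta> < e}"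
  shows "\<eta> \<in> Lambda_rho FF \<rho> x"
  unfolding Lambda_rho_def
proof (intro CollectI bexI[OF _ F] allI impI)
  fix U assume "open U \<and> \<eta> \<in> U"
  then obtain e where e: "e > 0" "ball \<eta> e \<subseteq> U" by (meson open_contains_ball)
  obtain n where n: "A n \<subseteq> {s. dist (x s) \<eta> < e}" using sm[OF e(1)] by blast
  obtain K where K: "finite K" "\<rho> (F - K) \<subseteq> A n" using sub unfolding sub_rho_def by blast
  have "\<forall>s\<in>\<rho> (F - K). x s \<in> U"
  proof
    fix s assume "s \<in> \<rho> (F - K)"
    then have "dist (x s) \<eta> < e" using K n by auto
    then show "x s \<in> U" using e(2) by (auto simp: dist_commute)
  qed
  then show "\<exists>K. finite K \<and> (\<forall>s\<in>\<rho> (F - K). x s \<in> U)" using K(1) by blast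
qed

definition xA :: "(nat \<Rightarrow> 'p set) \<Rightarrow> 'x \<Rightarrow> (nat \<Rightarrow> 'x) \<Rightarrow> 'p \<Rightarrow> 'x" where
  "xA A \<eta> y s = (if \<forall>n. s \<in> A n then \<eta> else y (LEAST n. s \<notin> A n))"

lemma xA_key1:
  assumes "\<forall>n. y n \<noteq> \<eta>"
  shows "{s. xA A \<eta> y s \<in> - (y ` {..n})} \<subseteq> A n"
proof
  fix s assume s: "s \<in> {s. xA A \<eta> y s \<in> - (y ` {..n})}"
  show "s \<in> A n"
  proof (cases "\<forall>n. s \<in> A n")
    case True then show ?thesis by simp
  next
    case False
    let ?L = "LEAST n. s \<notin> A n"
    have "y ?L \<notin> y ` {..n}" using s False by (simp add: xA_def)
    then have "?L > n" by (metis atMost_iff image_eqI not_le)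
    then show ?thesis using not_less_Least by blast
  qed
qed

lemma xA_key2:
  fixes y :: "nat \<Rightarrow> 'x::metric_space"
  assumes "\<forall>n. y n \<noteq> \<eta>" and "\<eta> \<in> Lambda_rho FF \<rho> (xA A \<eta> y)"
  shows "\<exists>F\<in>FF. \<forall>n. sub_rho \<rho> F (A n)"
proof -
  obtain F where F: "F \<in> FF" and H: "\<And>U. open U \<Longrightarrow> \<eta> \<in> U \<Longrightarrow> \<exists>K. finite K \<and> (\<forall>s\<in>\<rho> (F - K). xA A \<eta> y s \<in> U)"
    using assms(2) by (auto simp: Lambda_rho_def)
  have "sub_rho \<rho> F (A n)" for n
  proof -
    have "open (- (y ` {..n}))" by (simp add: finite_imp_closed open_Compl)
    moreover have "\<eta> \<in> - (y ` {..n})" using assms(1) by auto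
    ultimately obtain K where K: "finite K" "\<forall>s\<in>\<rho> (F - K). xA A \<eta> y s \<in> - (y ` {..n})"
      using H by blast
    then have "\<rho> (F - K) \<subseteq> A n" using xA_key1[OF assms(1), of A n] by blast
    then show ?thesis using K(1) unfolding sub_rho_def by blast
  qed
  then show ?thesis using F by blast
qed

lemma xA_key3:
  fixes y :: "nat \<Rightarrow> 'x::metric_space"
  assumes dec: "\<forall>n. A (Suc n) \<subseteq> A n" and lim: "y \<longlonglongrightarrow> \<eta>" and pos: "\<forall>n. A n \<in> I_rho_plus FF \<rho>"
  shows "\<eta> \<in> Gamma_rho FF \<rho> (xA A \<eta> y)"
  unfolding Gamma_rho_def
proof (intro CollectI allI impI)
  fix U assume U: "open U \<and> \<eta> \<in> U"
  then have "eventually (\<lambda>n. y n \<in> U) sequentially" using lim topological_tendstoD by blast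
  then obtain N where N: "\<And>n. n \<ge> N \<Longrightarrow> y n \<in> U" by (auto simp: eventually_sequentially)
  have "A N \<subseteq> {s. xA A \<eta> y s \<in> U}"
  proof
    fix s assume s: "s \<in> A N"
    show "s \<in> {s. xA A \<eta> y s \<in> U}"
    proof (cases "\<forall>n. s \<in> A n")
      case True then show ?thesis using U by (simp add: xA_def)
    next
      case False
      let ?L = "LEAST n. s \<notin> A n"
      obtain k where "s \<notin> A k" using False by blast
      then have "s \<notin> A ?L" by (rule LeastI)
      then have "\<not> ?L \<le> N" using decr_le[OF dec] s by blast
      moreover have "xA A \<eta> y s = y ?L" unfolding xA_def using False by (simp only: if_False)
      ultimately show ?thesis using N by simp
    qed
  qed
  then show "\<exists>F\<in>FF. \<rho> F \<subseteq> {s. xA A \<eta> y s \<in> U}" using pos Iplus_mono unfolding Iplus_iff by metis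
qed

lemma xA_level:
  assumes dec: "\<forall>n. A (Suc n) \<subseteq> A n" and s: "s \<in> A m" "s \<notin> A (Suc m)"
  shows "xA A \<eta> y s = y (Suc m)"
proof -
  have "(LEAST n. s \<notin> A n) = Suc m"
  proof (rule Least_equality)
    show "s \<notin> A (Suc m)" by fact
    fix k assume "s \<notin> A k"
    then show "Suc m \<le> k" using decr_le[OF dec, of k m] s by (metis not_less_eq_eq subsetD)
  qed
  then show ?thesis using s by (auto simp: xA_def)
qed

lemma ex_small: "(e::real) > 0 \<Longrightarrow> (c::real) > 0 \<Longrightarrow> \<exists>n. c / real (Suc n) < e"
proof -
  assume "e > 0" "c > 0"
  then obtain n where "inverse (real (Suc n)) < e / c" using reals_Archimedean
    by (metis divide_pos_pos)
  then have "c * inverse (real (Suc n)) < e" using \<open>c > 0\<close> by (simp add: field_simps)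
  then show ?thesis by (auto simp: field_simps)
qed

lemma part1a:
  fixes x :: "'p \<Rightarrow> 'x::metric_space"
  assumes adm: "admissible_family FF" and P: "P_plus FF \<rho>"
  shows "Lambda_rho FF \<rho> x = Gamma_rho FF \<rho> x"
proof
  show "Lambda_rho FF \<rho> x \<subseteq> Gamma_rho FF \<rho> x" using Lambda_sub_Gamma[OF adm] .
  show "Gamma_rho FF \<rho> x \<subseteq> Lambda_rho FF \<rho> x"
  proof
    fix \<eta> assume G: "\<eta> \<in> Gamma_rho FF \<rho> x"
    define A where "A n = {s. x s \<in> ball \<eta> (1 / real (Suc n))}" for n
    have dec: "\<forall>n. A (Suc n) \<subseteq> A n"
    proof
      fix n
      have "1 / real (Suc (Suc n)) \<le> 1 / real (Suc n)" by (simp add: frac_le)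
      then show "A (Suc n) \<subseteq> A n" unfolding A_def by auto
    qed
    have pos: "\<forall>n. A n \<in> I_rho_plus FF \<rho>"
    proof
      fix n
      have "open (ball \<eta> (1 / real (Suc n)))" "\<eta> \<in> ball \<eta> (1 / real (Suc n))" by auto
      then show "A n \<in> I_rho_plus FF \<rho>" using G unfolding A_def Gamma_rho_def Iplus_iff by blast
    qed
    obtain F where F: "F \<in> FF" "\<forall>n. sub_rho \<rho> F (A n)" using P dec pos unfolding P_plus_def by blast
    show "\<eta> \<in> Lambda_rho FF \<rho> x"
    proof (rule Lambda_from_seq[OF F])
      fix e :: real assume "e > 0"
      then obtain n where "1 / real (Suc n) < e" using ex_small[of e 1] by auto
      then have "A n \<subseteq> {s. dist (x s) \<eta> < e}" unfolding A_def by (auto simp: dist_commute)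
      then show "\<exists>n. A n \<subseteq> {s. dist (x s) \<eta> < e}" by blast
    qed
  qed
qed

lemma part1b:
  assumes lp: "\<exists>\<eta> :: 'x::metric_space. \<eta> islimpt UNIV"
    and H: "\<forall>x :: 'p \<Rightarrow> 'x. Lambda_rho FF \<rho> x = Gamma_rho FF \<rho> x"
  shows "P_plus FF \<rho>"
  unfolding P_plus_def
proof (intro allI impI)
  fix A :: "nat \<Rightarrow> 'p set"
  assume "(\<forall>n. A (Suc n) \<subseteq> A n) \<and> (\<forall>n. A n \<in> I_rho_plus FF \<rho>)"
  then have dec: "\<forall>n. A (Suc n) \<subseteq> A n" and pos: "\<forall>n. A n \<in> I_rho_plus FF \<rho>" by auto
  obtain \<eta> :: 'x where "\<eta> islimpt UNIV" using lp by blast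
  then obtain y where y: "\<forall>n. y n \<in> UNIV - {\<eta>}" "y \<longlonglongrightarrow> \<eta>" unfolding islimpt_sequential by blast
  have "\<eta> \<in> Gamma_rho FF \<rho> (xA A \<eta> y)" using xA_key3[OF dec y(2) pos] .
  then have "\<eta> \<in> Lambda_rho FF \<rho> (xA A \<eta> y)" using H by blast
  then show "\<exists>F\<in>FF. \<forall>n. sub_rho \<rho> F (A n)" using xA_key2 y(1) by blast
qed

lemma part2b:
  assumes lp: "\<exists>\<eta> :: 'x::metric_space. \<eta> islimpt UNIV"
    and H: "\<forall>x :: 'p \<Rightarrow> 'x. closed (Lambda_rho FF \<rho> x)"
  shows "P_bar FF \<rho>"
  unfolding P_bar_def
proof (intro allI impI)
  fix A :: "nat \<Rightarrow> 'p set"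
  assume "(\<forall>n. A (Suc n) \<subseteq> A n) \<and> (\<forall>n. A n \<in> I_rho_plus FF \<rho>) \<and> (\<forall>n. A n - A (Suc n) \<in> I_rho_plus FF \<rho>)"
  then have dec: "\<forall>n. A (Suc n) \<subseteq> A n" and diff: "\<forall>n. A n - A (Suc n) \<in> I_rho_plus FF \<rho>" by auto
  obtain \<eta> :: 'x where "\<eta> islimpt UNIV" using lp by blast
  then obtain y where y: "\<forall>n. y n \<in> UNIV - {\<eta>}" "y \<longlonglongrightarrow> \<eta>" unfolding islimpt_sequential by blast
  have inL: "y (Suc m) \<in> Lambda_rho FF \<rho> (xA A \<eta> y)" for m
  proof -
    obtain F where F: "F \<in> FF" "\<rho> F \<subseteq> A m - A (Suc m)" using diff unfolding Iplus_iff by blast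
    have "\<forall>s\<in>\<rho> (F - {}). xA A \<eta> y s = y (Suc m)"
    proof
      fix s assume "s \<in> \<rho> (F - {})"
      then have "s \<in> A m" "s \<notin> A (Suc m)" using F(2) by auto
      then show "xA A \<eta> y s = y (Suc m)" by (rule xA_level[OF dec])
    qed
    then show ?thesis unfolding Lambda_rho_def using F(1) by (intro CollectI bexI[of _ F]) (metis finite.emptyI)
  qed
  have lim: "(\<lambda>m. y (Suc m)) \<longlonglongrightarrow> \<eta>" using y(2) LIMSEQ_Suc by blast
  have cl: "closed (Lambda_rho FF \<rho> (xA A \<eta> y))" using H by blast
  have inL': "\<And>m. (\<lambda>m. y (Suc m)) m \<in> Lambda_rho FF \<rho> (xA A \<eta> y)" using inL by simp
  have "\<eta> \<in> Lambda_rho FF \<rho> (xA A \<eta> y)" using closed_sequentially[OF cl inL' lim] .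
  then show "\<exists>F\<in>FF. \<forall>n. sub_rho \<rho> F (A n)" using xA_key2 y(1) by blast
qed

lemma part2a:
  fixes x :: "'p \<Rightarrow> 'x::metric_space"
  assumes adm: "admissible_family FF" and P: "P_bar FF \<rho>"
  shows "closed (Lambda_rho FF \<rho> x)"
  unfolding closed_limpt
proof (intro allI impI)
  fix \<eta> assume "\<eta> islimpt Lambda_rho FF \<rho> x"
  then have ap: "\<forall>\<epsilon>>0. \<exists>x'\<in>Lambda_rho FF \<rho> x. x' \<noteq> \<eta> \<and> dist x' \<eta> < \<epsilon>"
    unfolding islimpt_approachable .
  define pt where "pt \<epsilon> = (SOME q. q \<in> Lambda_rho FF \<rho> x \<and> q \<noteq> \<eta> \<and> dist q \<eta> < \<epsilon>)" for \<epsilon>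
  have ptP: "pt \<epsilon> \<in> Lambda_rho FF \<rho> x \<and> pt \<epsilon> \<noteq> \<eta> \<and> dist (pt \<epsilon>) \<eta> < \<epsilon>" if "\<epsilon> > 0" for \<epsilon>
    unfolding pt_def by (rule someI_ex) (use ap that in blast)
  define e where "e = rec_nat 1 (\<lambda>n en. min (dist (pt en) \<eta> / 2) (1 / real (Suc (Suc n))))"
  have e0: "e 0 = 1" by (simp add: e_def)
  have eS: "e (Suc n) = min (dist (pt (e n)) \<eta> / 2) (1 / real (Suc (Suc n)))" for n by (simp add: e_def)
  have epos: "e n > 0" for n
  proof (induction n)
    case 0 then show ?case by (simp add: e0)
  next
    case (Suc n) then show ?case using ptP[of "e n"] by (simp add: eS)
  qed
  have esm: "e (Suc n) < dist (pt (e n)) \<eta>" for n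
  proof -
    have "dist (pt (e n)) \<eta> > 0" using ptP[OF epos[of n]] by simp
    then have h: "dist (pt (e n)) \<eta> / 2 < dist (pt (e n)) \<eta>" by linarith
    show ?thesis unfolding eS by (rule min.strict_coboundedI1) (rule h)
  qed
  have ele: "e n \<le> 1 / real (Suc n)" for n
  proof (cases n)
    case 0 then show ?thesis by (simp add: e0)
  next
    case (Suc m)
    have "e (Suc m) \<le> 1 / real (Suc (Suc m))" unfolding eS by (rule min.cobounded2)
    then show ?thesis using Suc by simp
  qed
  have pt_lt: "dist (pt (e n)) \<eta> < e n" for n using ptP[OF epos[of n]] by simp
  define A where "A n = {s. dist (x s) \<eta> < e n}" for n
  have edec: "e (Suc n) < e n" for n using esm[of n] pt_lt[of n] by linarith
  have dec: "\<forall>n. A (Suc n) \<subseteq> A n"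
  proof
    fix n show "A (Suc n) \<subseteq> A n" unfolding A_def using edec[of n] by auto
  qed
  have diff: "A n - A (Suc n) \<in> I_rho_plus FF \<rho>" for n
  proof -
    let ?p = "pt (e n)"
    let ?d = "dist ?p \<eta>"
    define \<delta> where "\<delta> = min (e n - ?d) (?d - e (Suc n))"
    have dpos: "\<delta> > 0" unfolding \<delta>_def using esm[of n] pt_lt[of n] by simp
    have "?p \<in> Gamma_rho FF \<rho> x" using ptP[OF epos[of n]] Lambda_sub_Gamma[OF adm] by blast
    moreover have "open (ball ?p \<delta>)" "?p \<in> ball ?p \<delta>" using dpos by auto
    ultimately obtain F where F: "F \<in> FF" "\<rho> F \<subseteq> {s. x s \<in> ball ?p \<delta>}"
      unfolding Gamma_rho_def by blast
    have "{s. x s \<in> ball ?p \<delta>} \<subseteq> A n - A (Suc n)"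
    proof
      fix s assume "s \<in> {s. x s \<in> ball ?p \<delta>}"
      then have ds: "dist ?p (x s) < \<delta>" by simp
      have t1: "dist (x s) \<eta> \<le> dist (x s) ?p + ?d" by (rule dist_triangle)
      have t2: "?d \<le> dist ?p (x s) + dist (x s) \<eta>" by (rule dist_triangle)
      have "dist (x s) \<eta> < e n" using t1 ds unfolding \<delta>_def by (simp add: dist_commute)
      moreover have "\<not> dist (x s) \<eta> < e (Suc n)" using t2 ds unfolding \<delta>_def by simp
      ultimately show "s \<in> A n - A (Suc n)" unfolding A_def by simp
    qed
    then show ?thesis using F unfolding Iplus_iff by blast
  qed
  have pos: "A n \<in> I_rho_plus FF \<rho>" for n using diff[of n] Iplus_mono by blast
  obtain F where F: "F \<in> FF" "\<forall>n. sub_rho \<rho> F (A n)" using P dec pos diff unfolding P_bar_def by blast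
  show "\<eta> \<in> Lambda_rho FF \<rho> x"
  proof (rule Lambda_from_seq[OF F])
    fix \<epsilon> :: real assume "\<epsilon> > 0"
    then obtain n where "1 / real (Suc n) < \<epsilon>" using ex_small[of \<epsilon> 1] by auto
    then have "A n \<subseteq> {s. dist (x s) \<eta> < \<epsilon>}" unfolding A_def using ele[of n] by auto
    then show "\<exists>n. A n \<subseteq> {s. dist (x s) \<eta> < \<epsilon>}" by blast
  qed
qed


lemma compact_I:
  fixes x :: "'p \<Rightarrow> 'x::metric_space"
  assumes pr: "partition_regular FF \<rho>" and C: "compact C" and dis: "C \<inter> Gamma_rho FF \<rho> x = {}"
  shows "{t. x t \<in> C} \<in> I_rho FF \<rho>"
proof -
  define \<U> where "\<U> = {U. open U \<and> {t. x t \<in> U} \<in> I_rho FF \<rho>}"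
  have "C \<subseteq> \<Union>\<U>"
  proof
    fix z assume "z \<in> C"
    then have "z \<notin> Gamma_rho FF \<rho> x" using dis by blast
    then have "\<not> (\<forall>U. open U \<and> z \<in> U \<longrightarrow> (\<exists>F\<in>FF. \<rho> F \<subseteq> {s. x s \<in> U}))"
      unfolding Gamma_rho_def by simp
    then obtain U where "open U" "z \<in> U" "\<forall>F\<in>FF. \<not> \<rho> F \<subseteq> {s. x s \<in> U}"
      by blast
    then have "U \<in> \<U>" "z \<in> U" unfolding \<U>_def I_iff by simp_all
    then show "z \<in> \<Union>\<U>" by (rule UnionI)
  qed
  moreover have "\<And>B. B \<in> \<U> \<Longrightarrow> open B" unfolding \<U>_def by simp
  ultimately obtain \<V> where V: "\<V> \<subseteq> \<U>" "finite \<V>" "C \<subseteq> \<Union>\<V>"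
    by (rule compactE[OF C])
  have "\<And>U. U \<in> \<V> \<Longrightarrow> {t. x t \<in> U} \<in> I_rho FF \<rho>" using V(1) unfolding \<U>_def by auto
  then have "(\<Union>U\<in>\<V>. {t. x t \<in> U}) \<in> I_rho FF \<rho>"
    by (rule I_finite_Union[OF pr V(2)])
  moreover have "{t. x t \<in> C} \<subseteq> (\<Union>U\<in>\<V>. {t. x t \<in> U})" using V(3) by blast
  ultimately show ?thesis by (rule I_subset)
qed

lemma lc_nbhd:
  assumes "locally_compact_space (euclidean::'x::metric_space topology)"
  shows "\<exists>U K. open U \<and> compact K \<and> (\<eta>::'x) \<in> U \<and> U \<subseteq> K"
  using assms unfolding locally_compact_space_def
  by (metis UNIV_I compactin_euclidean_iff open_openin topspace_euclidean)

lemma part3a: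
  fixes x :: "'p \<Rightarrow> 'x::metric_space"
  assumes pr: "partition_regular FF \<rho>" and lc: "locally_compact_space (euclidean :: 'x topology)"
    and P: "P_minus FF \<rho>" and iso: "isolated_point_of \<eta> (Gamma_rho FF \<rho> x)"
  shows "\<eta> \<in> Lambda_rho FF \<rho> x"
proof -
  have iso': "\<eta> \<in> Gamma_rho FF \<rho> x \<and> (\<exists>U. open U \<and> U \<inter> Gamma_rho FF \<rho> x = {\<eta>})"
    using iso unfolding isolated_point_of_def .
  then have G: "\<eta> \<in> Gamma_rho FF \<rho> x" by (rule conjunct1)
  from iso' have "\<exists>U. open U \<and> U \<inter> Gamma_rho FF \<rho> x = {\<eta>}" by (rule conjunct2)
  then obtain V where V0: "open V \<and> V \<inter> Gamma_rho FF \<rho> x = {\<eta>}" by (rule exE)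
  then have V: "open V" "V \<inter> Gamma_rho FF \<rho> x = {\<eta>}" by (rule conjunct1, rule conjunct2)
  obtain U K where UK: "open U" "compact K" "\<eta> \<in> U" "U \<subseteq> K"
    using lc_nbhd[OF lc, of \<eta>] by blast
  have "open (U \<inter> V)" "\<eta> \<in> U \<inter> V" using UK V G by auto
  then obtain r where r: "r > 0" "ball \<eta> r \<subseteq> U \<inter> V"
    using open_contains_ball by blast
  define c where "c = r / 2"
  have c1: "c > 0" using r unfolding c_def by simp
  have "cball \<eta> c \<subseteq> ball \<eta> r" unfolding c_def
  proof (rule subsetI)
    fix z assume "z \<in> cball \<eta> (r / 2)"
    then have "dist \<eta> z \<le> r / 2" by simp
    then show "z \<in> ball \<eta> r" using r(1) by simp
  qed
  then have c: "c > 0" "cball \<eta> c \<subseteq> U \<inter> V" using c1 r(2) by auto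
  define A where "A n = {t. x t \<in> ball \<eta> (c / real (Suc n))}" for n
  have dec: "\<forall>n. A (Suc n) \<subseteq> A n"
  proof
    fix n
    have "c / real (Suc (Suc n)) \<le> c / real (Suc n)" using c by (simp add: frac_le)
    then show "A (Suc n) \<subseteq> A n" unfolding A_def by auto
  qed
  have pos: "\<forall>n. A n \<in> I_rho_plus FF \<rho>"
  proof
    fix n
    have "open (ball \<eta> (c / real (Suc n)))" "\<eta> \<in> ball \<eta> (c / real (Suc n))" using c by auto
    then show "A n \<in> I_rho_plus FF \<rho>" using G unfolding A_def Gamma_rho_def Iplus_iff by blast
  qed
  have diff: "\<forall>n. A n - A (Suc n) \<in> I_rho FF \<rho>"
  proof
    fix n
    define C where "C = cball \<eta> c \<inter> - ball \<eta> (c / real (Suc (Suc n)))"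
    have "closed C" unfolding C_def by (simp add: closed_Int closed_Compl)
    then have cKC: "compact (K \<inter> C)" by (rule compact_Int_closed[OF UK(2)])
    have Csub: "C \<subseteq> cball \<eta> c" unfolding C_def by (rule Int_lower1)
    then have CU: "C \<subseteq> U \<inter> V" using c(2) by (rule subset_trans)
    then have "C \<subseteq> K" using UK(4) by blast
    then have "K \<inter> C = C" by (rule Int_absorb1)
    then have cC: "compact C" using cKC by simp
    have "c / real (Suc (Suc n)) > 0" using c by simp
    then have "\<eta> \<in> ball \<eta> (c / real (Suc (Suc n)))" by (rule centre_in_ball[THEN iffD2])
    then have etaC: "\<eta> \<notin> C" unfolding C_def by blast
    have "C \<inter> Gamma_rho FF \<rho> x \<subseteq> V \<inter> Gamma_rho FF \<rho> x" using CU by blast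
    then have "C \<inter> Gamma_rho FF \<rho> x \<subseteq> {\<eta>}" using V(2) by simp
    then have "C \<inter> Gamma_rho FF \<rho> x = {}" using etaC by blast
    then have "{t. x t \<in> C} \<in> I_rho FF \<rho>" by (rule compact_I[OF pr cC])
    moreover have "A n - A (Suc n) \<subseteq> {t. x t \<in> C}"
    proof
      fix t assume "t \<in> A n - A (Suc n)"
      then have "dist \<eta> (x t) < c / real (Suc n)" "\<not> dist \<eta> (x t) < c / real (Suc (Suc n))"
        unfolding A_def by auto
      moreover have "c / real (Suc n) \<le> c" using c by (simp add: divide_le_eq)
      ultimately have "dist \<eta> (x t) \<le> c" "\<not> dist \<eta> (x t) < c / real (Suc (Suc n))" by linarith+
      then show "t \<in> {t. x t \<in> C}" unfolding C_def by simp
    qed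
    ultimately show "A n - A (Suc n) \<in> I_rho FF \<rho>" by (rule I_subset)
  qed
  have "\<exists>F\<in>FF. \<forall>n. sub_rho \<rho> F (A n)" using P dec pos diff unfolding P_minus_def by simp
  then obtain F where F: "F \<in> FF" "\<forall>n. sub_rho \<rho> F (A n)" by blast
  show "\<eta> \<in> Lambda_rho FF \<rho> x"
  proof (rule Lambda_from_seq[OF F])
    fix e :: real assume "e > 0"
    then obtain n where "c / real (Suc n) < e" using ex_small[of e c] c by auto
    then have "A n \<subseteq> {s. dist (x s) \<eta> < e}" unfolding A_def by (auto simp: dist_commute)
    then show "\<exists>n. A n \<subseteq> {s. dist (x s) \<eta> < e}" by blast
  qed
qed

lemma part3b:
  assumes pr: "partition_regular FF \<rho>" and lp: "\<exists>\<eta> :: 'x::metric_space. \<eta> islimpt UNIV"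
    and H: "\<forall>x :: 'p \<Rightarrow> 'x. \<forall>\<eta>. isolated_point_of \<eta> (Gamma_rho FF \<rho> x) \<longrightarrow> \<eta> \<in> Lambda_rho FF \<rho> x"
  shows "P_minus FF \<rho>"
  unfolding P_minus_def
proof (intro allI impI)
  fix A :: "nat \<Rightarrow> 'p set"
  assume "(\<forall>n. A (Suc n) \<subseteq> A n) \<and> (\<forall>n. A n \<in> I_rho_plus FF \<rho>) \<and> (\<forall>n. A n - A (Suc n) \<in> I_rho FF \<rho>)"
  then have dec: "\<forall>n. A (Suc n) \<subseteq> A n" and pos: "\<forall>n. A n \<in> I_rho_plus FF \<rho>"
    and diff: "\<forall>n. A n - A (Suc n) \<in> I_rho FF \<rho>" by auto
  obtain \<eta> :: 'x where "\<eta> islimpt UNIV" using lp by blast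
  then obtain y where y: "\<forall>n. y n \<in> UNIV - {\<eta>}" "y \<longlonglongrightarrow> \<eta>" unfolding islimpt_sequential by blast
  let ?x = "xA A \<eta> y"
  have G: "\<eta> \<in> Gamma_rho FF \<rho> ?x" using xA_key3[OF dec y(2) pos] .
  have "- {y 0} \<inter> Gamma_rho FF \<rho> ?x = {\<eta>}"
  proof
    show "{\<eta>} \<subseteq> - {y 0} \<inter> Gamma_rho FF \<rho> ?x" using G y(1) by auto
    show "- {y 0} \<inter> Gamma_rho FF \<rho> ?x \<subseteq> {\<eta>}"
    proof (rule ccontr)
      assume "\<not> ?thesis"
      then obtain z where z: "z \<noteq> y 0" "z \<in> Gamma_rho FF \<rho> ?x" "z \<noteq> \<eta>" by blast
      define \<delta> where "\<delta> = dist z \<eta> / 2"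
      have dpos: "\<delta> > 0" using z(3) unfolding \<delta>_def by simp
      have "eventually (\<lambda>n. dist (y n) \<eta> < \<delta>) sequentially" using y(2) dpos tendstoD by blast
      then obtain N where N: "\<And>n. n \<ge> N \<Longrightarrow> dist (y n) \<eta> < \<delta>" by (auto simp: eventually_sequentially)
      define W where "W = ball z \<delta> \<inter> - {y 0}"
      have oW: "open W" unfolding W_def by (simp add: open_Int open_Compl)
      have zW: "z \<in> W" unfolding W_def using dpos z(1) by simp
      have sub: "{t. ?x t \<in> W} \<subseteq> (\<Union>m\<in>{..<N}. A m - A (Suc m))"
      proof
        fix t assume "t \<in> {t. ?x t \<in> W}"
        then have tW: "?x t \<in> W" by simp
        show "t \<in> (\<Union>m\<in>{..<N}. A m - A (Suc m))"
        proof (cases "\<forall>n. t \<in> A n")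
          case True
          then have "?x t = \<eta>" by (simp add: xA_def)
          then have "dist z \<eta> < \<delta>" using tW unfolding W_def by simp
          then show ?thesis using dpos unfolding \<delta>_def by simp
        next
          case False
          let ?L = "LEAST n. t \<notin> A n"
          have xt: "?x t = y ?L" unfolding xA_def using False by (simp only: if_False)
          obtain k where "t \<notin> A k" using False by blast
          then have nL: "t \<notin> A ?L" by (rule LeastI)
          have "?L \<noteq> 0"
          proof
            assume "?L = 0"
            then have "?x t = y 0" using xt by simp
            then show False using tW unfolding W_def by simp
          qed
          then obtain m where m: "?L = Suc m" using not0_implies_Suc by blast
          have tm: "t \<in> A m" using not_less_Least[of m "\<lambda>n. t \<notin> A n"] m by auto
          have "?L < N"
          proof (rule ccontr)
            assume "\<not> ?L < N"
            then have "dist (y ?L) \<eta> < \<delta>" using N by simp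
            moreover have "dist z (y ?L) < \<delta>" using tW xt unfolding W_def by simp
            moreover have "dist z \<eta> \<le> dist z (y ?L) + dist (y ?L) \<eta>" by (rule dist_triangle)
            ultimately show False unfolding \<delta>_def by linarith
          qed
          then have "m < N" using m by simp
          then show ?thesis using tm nL m by auto
        qed
      qed
      have "(\<Union>m\<in>{..<N}. A m - A (Suc m)) \<in> I_rho FF \<rho>"
        by (rule I_finite_Union[OF pr]) (use diff in auto)
      then have "{t. ?x t \<in> W} \<in> I_rho FF \<rho>" using sub I_subset by blast
      moreover obtain F where "F \<in> FF" "\<rho> F \<subseteq> {t. ?x t \<in> W}"
        using z(2) oW zW unfolding Gamma_rho_def by blast
      ultimately show False unfolding I_iff by blast
    qed
  qed
  moreover have "open (- {y 0})" by (simp add: open_Compl)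
  ultimately have "isolated_point_of \<eta> (Gamma_rho FF \<rho> ?x)"
    unfolding isolated_point_of_def using G by blast
  then have "\<eta> \<in> Lambda_rho FF \<rho> ?x" using H by blast
  then show "\<exists>F\<in>FF. \<forall>n. sub_rho \<rho> F (A n)" using xA_key2 y(1) by blast
qed

theorem proposition3p2:
  fixes FF :: "('o::countable) set set"
    and \<rho> :: "'o set \<Rightarrow> ('p::countable) set"
  assumes "infinite (UNIV :: 'o set)"
    and "infinite (UNIV :: 'p set)"
    and "admissible_family FF"
    and "partition_regular FF \<rho>"
    and "\<exists>\<eta> :: 'x::metric_space. \<eta> islimpt UNIV"
  shows "(P_plus FF \<rho> \<longleftrightarrow>
            (\<forall>x :: 'p \<Rightarrow> 'x. Lambda_rho FF \<rho> x = Gamma_rho FF \<rho> x))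
       \<and> (P_bar FF \<rho> \<longleftrightarrow>
            (\<forall>x :: 'p \<Rightarrow> 'x. closed (Lambda_rho FF \<rho> x)))
       \<and> (locally_compact_space (euclidean :: 'x topology) \<longrightarrow>
            (P_minus FF \<rho> \<longleftrightarrow>
              (\<forall>x :: 'p \<Rightarrow> 'x. \<forall>\<eta>. isolated_point_of \<eta> (Gamma_rho FF \<rho> x) \<longrightarrow>
                  \<eta> \<in> Lambda_rho FF \<rho> x)))"
proof (intro conjI impI)
  show "P_plus FF \<rho> \<longleftrightarrow> (\<forall>x :: 'p \<Rightarrow> 'x. Lambda_rho FF \<rho> x = Gamma_rho FF \<rho> x)"
    using part1a[OF assms(3)] part1b[OF assms(5)] by metis
  show "P_bar FF \<rho> \<longleftrightarrow> (\<forall>x :: 'p \<Rightarrow> 'x. closed (Lambda_rho FF \<rho> x))"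
    using part2a[OF assms(3)] part2b[OF assms(5)] by metis
  assume lc: "locally_compact_space (euclidean :: 'x topology)"
  show "P_minus FF \<rho> \<longleftrightarrow> (\<forall>x :: 'p \<Rightarrow> 'x. \<forall>\<eta>. isolated_point_of \<eta> (Gamma_rho FF \<rho> x) \<longrightarrow>
                  \<eta> \<in> Lambda_rho FF \<rho> x)"
    using part3a[OF assms(4) lc] part3b[OF assms(4,5)] by metis
qed

end
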